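(* For all $j\in\mathbb{Z}_n$ the element $c_j:=b_kb_{j-k}+b_{j-k}b_k$ is independent of $k\in\mathbb{Z}_n$ and central in $A$. Moreover, for each $r\geq 0$, the set $$\mathcal{B}_r=\{\,b_0^{i_0}b_1^{i_1}\cdots b_{n-1}^{i_{n-1}}\,c_0^{j_0}c_1^{j_1}\cdots c_{n-1}^{j_{n-1}}\ \mid\ (i_0,\dots,i_{n-1})\in\{0,1\}^n,\ (j_0,\dots,j_{n-1})\in\mathbb{N}^n,\ \textstyle\sum_s i_s+2\sum_s j_s=r\,\}$$ is a $\Bbbk$-linear basis of the degree-$r$ component $A_r$ of $A$.
   Context: $\Bbbk$ is an algebraically closed field of characteristic zero, $n\ge 2$, $A=\Bbbk_{-1}[x_0,\dots,x_{n-1}]$ is generated by degree-one $x_0,\dots,x_{n-1}$ with $x_ix_j=-x_jx_i$ ($i\ne j$). Let $\omega$ be a primitive $n$th root of unity and $b_\gamma=\frac1n\sum_{i=0}^{n-1}\omega^{i\gamma}x_i$ for $\gamma\in\mathbb{Z}_n$ (indices modulo $n$). *)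

theory Defs
  imports "HOL-Computational_Algebra.Polynomial"
begin

text \<open>The skew polynomial ring A = k_{-1}[x_0,...,x_{n-1}] is modelled by its
monomial basis: an element is a finitely supported coefficient function on
exponent vectors a :: nat \<Rightarrow> nat (with a i = 0 for i \<ge> n), where the
monomial a stands for x_0^{a 0} ... x_{n-1}^{a (n-1)}.  The product is the
(-1)-twisted convolution: x^a x^b = (-1)^(sum_{i>j} a_i b_j) x^(a+b),
which is exactly what the relations x_i x_j = - x_j x_i (i \<noteq> j) give.\<close>

type_synonym 'k skel = "(nat \<Rightarrow> nat) \<Rightarrow> 'k"

definition skA :: "nat \<Rightarrow> 'k::field skel set" where
  "skA n = {f. finite {a. f a \<noteq> 0} \<and> (\<forall>a. f a \<noteq> 0 \<longrightarrow> (\<forall>i\<ge>n. a i = 0))}"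

definition skA_deg :: "nat \<Rightarrow> nat \<Rightarrow> 'k::field skel set" where
  "skA_deg n r = {f \<in> skA n. \<forall>a. f a \<noteq> 0 \<longrightarrow> (\<Sum>i<n. a i) = r}"

definition sk_sign :: "nat \<Rightarrow> (nat \<Rightarrow> nat) \<Rightarrow> (nat \<Rightarrow> nat) \<Rightarrow> 'k::field" where
  "sk_sign n a b = (-1) ^ (\<Sum>i<n. \<Sum>j<i. a i * b j)"

definition sk_mul :: "nat \<Rightarrow> 'k::field skel \<Rightarrow> 'k skel \<Rightarrow> 'k skel" where
  "sk_mul n f g = (\<lambda>c. \<Sum>a\<in>{a. \<forall>i. a i \<le> c i}.
       sk_sign n a (\<lambda>i. c i - a i) * f a * g (\<lambda>i. c i - a i))"

definition sk_add :: "'k::field skel \<Rightarrow> 'k skel \<Rightarrow> 'k skel" where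
  "sk_add f g = (\<lambda>a. f a + g a)"

definition sk_zero :: "'k::field skel" where
  "sk_zero = (\<lambda>a. 0)"

definition sk_one :: "'k::field skel" where
  "sk_one = (\<lambda>a. if a = (\<lambda>_. 0) then 1 else 0)"

definition sk_x :: "nat \<Rightarrow> 'k::field skel" where
  "sk_x i = (\<lambda>a. if a = (\<lambda>j. if j = i then 1 else 0) then 1 else 0)"

definition sk_pow :: "nat \<Rightarrow> 'k::field skel \<Rightarrow> nat \<Rightarrow> 'k skel" where
  "sk_pow n f k = (sk_mul n f ^^ k) sk_one"

definition sk_prod :: "nat \<Rightarrow> 'k::field skel list \<Rightarrow> 'k skel" where
  "sk_prod n fs = foldr (sk_mul n) fs sk_one"

definition sk_b :: "nat \<Rightarrow> 'k::field \<Rightarrow> nat \<Rightarrow> 'k skel" where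
  "sk_b n \<omega> \<gamma> = (\<lambda>a. (1 / of_nat n) * (\<Sum>i<n. \<omega> ^ (i * \<gamma>) * sk_x i a))"

text \<open>c_j computed with the auxiliary index k: b_k b_{j-k} + b_{j-k} b_k
(indices mod n; for j, k < n, j - k mod n is (j + n - k) mod n).\<close>
definition sk_c :: "nat \<Rightarrow> 'k::field \<Rightarrow> nat \<Rightarrow> nat \<Rightarrow> 'k skel" where
  "sk_c n \<omega> j k = sk_add (sk_mul n (sk_b n \<omega> k) (sk_b n \<omega> ((j + n - k) mod n)))
                          (sk_mul n (sk_b n \<omega> ((j + n - k) mod n)) (sk_b n \<omega> k))"

definition sk_idx :: "nat \<Rightarrow> nat \<Rightarrow> ((nat \<Rightarrow> nat) \<times> (nat \<Rightarrow> nat)) set" where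
  "sk_idx n r = {(iv, jv). (\<forall>s. iv s \<le> 1) \<and> (\<forall>s\<ge>n. iv s = 0) \<and> (\<forall>s\<ge>n. jv s = 0)
                  \<and> (\<Sum>s<n. iv s) + 2 * (\<Sum>s<n. jv s) = r}"

definition sk_bas :: "nat \<Rightarrow> 'k::field \<Rightarrow> (nat \<Rightarrow> nat) \<times> (nat \<Rightarrow> nat) \<Rightarrow> 'k skel" where
  "sk_bas n \<omega> p = sk_prod n
     (map (\<lambda>\<gamma>. sk_pow n (sk_b n \<omega> \<gamma>) (fst p \<gamma>)) [0..<n]
      @ map (\<lambda>\<gamma>. sk_pow n (sk_c n \<omega> \<gamma> 0) (snd p \<gamma>)) [0..<n])"

definition sk_lincomb :: "'i set \<Rightarrow> ('i \<Rightarrow> 'k::field) \<Rightarrow> ('i \<Rightarrow> 'k skel) \<Rightarrow> 'k skel" where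
  "sk_lincomb I u v = (\<lambda>a. \<Sum>p\<in>I. u p * v p a)"

definition sk_is_basis :: "'i set \<Rightarrow> ('i \<Rightarrow> 'k::field skel) \<Rightarrow> 'k skel set \<Rightarrow> bool" where
  "sk_is_basis I v V \<longleftrightarrow> finite I \<and> (\<forall>p\<in>I. v p \<in> V)
     \<and> (\<forall>u. sk_lincomb I u v = sk_zero \<longrightarrow> (\<forall>p\<in>I. u p = 0))
     \<and> (\<forall>f\<in>V. \<exists>u. f = sk_lincomb I u v)"

end

theory Submission
  imports Defs "HOL-Library.Function_Algebras"
begin


lemma sum_fun_apply: "(\<Sum>x\<in>A. F x) y = (\<Sum>x\<in>A. F x y)"
  by (induct A rule: infinite_finite_induct) auto

definition sc :: "'k::field \<Rightarrow> 'k skel \<Rightarrow> 'k skel" where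
  "sc c f = (\<lambda>x. c * f x)"

definition mono :: "(nat \<Rightarrow> nat) \<Rightarrow> 'k::field skel" where
  "mono a = (\<lambda>c. if c = a then 1 else 0)"

definition fs :: "nat \<Rightarrow> (nat \<Rightarrow> nat) \<Rightarrow> bool" where
  "fs n a \<longleftrightarrow> (\<forall>i\<ge>n. a i = 0)"

lemma sk_add_eq: "sk_add f g = f + g"
  by (simp add: sk_add_def plus_fun_def)

lemma sk_zero_eq: "sk_zero = 0"
  by (simp add: sk_zero_def zero_fun_def)

lemma sc_apply[simp]: "sc c f x = c * f x" by (simp add: sc_def)

lemma sc_add: "sc c (f + g) = sc c f + sc c g"
  by (simp add: sc_def fun_eq_iff algebra_simps)
lemma sc_add2: "sc (c + d) f = sc c f + sc d f"
  by (simp add: sc_def fun_eq_iff algebra_simps)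
lemma sc_sc: "sc c (sc d f) = sc (c * d) f"
  by (simp add: sc_def fun_eq_iff algebra_simps)
lemma sc_0[simp]: "sc 0 f = 0" "sc c 0 = 0"
  by (simp_all add: sc_def fun_eq_iff)
lemma sc_1[simp]: "sc 1 f = f"
  by (simp add: sc_def fun_eq_iff)
lemma sc_diff: "sc c (f - g) = sc c f - sc c g"
  by (simp add: sc_def fun_eq_iff algebra_simps)
lemma sc_sum: "sc c (\<Sum>x\<in>A. F x) = (\<Sum>x\<in>A. sc c (F x))"
  by (simp add: fun_eq_iff sum_fun_apply sum_distrib_left)

interpretation V: vector_space "sc :: 'k::field \<Rightarrow> 'k skel \<Rightarrow> 'k skel"
  by unfold_locales (simp_all add: sc_def fun_eq_iff algebra_simps)

lemma finite_below:
  assumes "fs n c"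
  shows "finite {a. \<forall>i. a i \<le> c i}"
proof -
  let ?M = "{..Max (c ` {..<n})}"
  let ?L = "{xs. set xs \<subseteq> ?M \<and> length xs = n}"
  have "(\<lambda>a. map a [0..<n]) ` {a. \<forall>i. a i \<le> c i} \<subseteq> ?L"
  proof (rule image_subsetI)
    fix a assume "a \<in> {a. \<forall>i. a i \<le> c i}"
    then have a: "\<forall>i. a i \<le> c i" by simp
    have "set (map a [0..<n]) \<subseteq> ?M"
    proof
      fix x assume x: "x \<in> set (map a [0..<n])"
      then obtain i where i: "i < n" "x = a i" by auto
      have "c i \<le> Max (c ` {..<n})" using i by (intro Max_ge) auto
      then show "x \<in> ?M" using a i by (auto intro: order_trans)
    qed
    then show "map a [0..<n] \<in> ?L" by simp
  qed
  moreover have "finite ?L" by (rule finite_lists_length_eq) simp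
  moreover have "inj_on (\<lambda>a. map a [0..<n]) {a. \<forall>i. a i \<le> c i}"
  proof (rule inj_onI)
    fix a b assume a: "a \<in> {a. \<forall>i. a i \<le> c i}" and b: "b \<in> {a. \<forall>i. a i \<le> c i}"
      and e: "map a [0..<n] = map b [0..<n]"
    show "a = b"
    proof
      fix i show "a i = b i"
      proof (cases "i < n")
        case True then show ?thesis using e by (simp add: map_eq_conv)
      next
        case False
        then have "c i = 0" using assms by (simp add: fs_def)
        then show ?thesis using a b by (metis le_zero_eq mem_Collect_eq)
      qed
    qed
  qed
  ultimately show ?thesis by (intro finite_imageD[where f="\<lambda>a. map a [0..<n]"]) (rule finite_subset)
qed

lemma fs_add[simp]: "fs n a \<Longrightarrow> fs n b \<Longrightarrow> fs n (a + b)"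
  by (simp add: fs_def)

lemma mul_mono:
  assumes "fs n a" "fs n b"
  shows "sk_mul n (mono a) (mono b) = sc (sk_sign n a b) (mono (a + b))"
proof
  fix c :: "nat \<Rightarrow> nat"
  show "sk_mul n (mono a) (mono b) c = sc (sk_sign n a b) (mono (a + b)) c"
  proof (cases "c = a + b")
    case True
    have fin: "finite {a'. \<forall>i. a' i \<le> c i}" using True assms by (intro finite_below[of n]) (simp add: fs_def)
    have "sk_mul n (mono a) (mono b) c =
      (\<Sum>a'\<in>{a'. \<forall>i. a' i \<le> c i}. if a' = a then sk_sign n a b else 0)"
      unfolding sk_mul_def using True
      by (intro sum.cong) (auto simp: mono_def)
    also have "\<dots> = sk_sign n a b" using fin True by (simp add: sum.delta')
    finally show ?thesis using True by (simp add: mono_def)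
  next
    case False
    have "sk_mul n (mono a) (mono b) c = (\<Sum>a'\<in>{a'. \<forall>i. a' i \<le> c i}. 0)"
      unfolding sk_mul_def
    proof (intro sum.cong refl)
      fix a' assume "a' \<in> {a'. \<forall>i. a' i \<le> c i}"
      then have le: "\<forall>i. a' i \<le> c i" by simp
      show "sk_sign n a' (\<lambda>i. c i - a' i) * mono a a' * mono b (\<lambda>i. c i - a' i) = 0"
      proof (cases "a' = a \<and> (\<lambda>i. c i - a' i) = b")
        case True
        then have "c = a + b" using le by (auto simp: fun_eq_iff) (metis le_add_diff_inverse)
        then show ?thesis using False by simp
      next
        case False then show ?thesis by (auto simp: mono_def)
      qed
    qed
    then show ?thesis using False by (simp add: mono_def)
  qed
qed

lemma sign_cocycle:
  "sk_sign n a b * (sk_sign n (a + b) c :: 'k::field) = sk_sign n a (b + c) * sk_sign n b c"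
  unfolding sk_sign_def power_add[symmetric]
  by (rule arg_cong[where f="\<lambda>x. (-1) ^ x"])
     (simp only: plus_fun_apply distrib_left distrib_right sum.distrib add.assoc)

lemma mul_add_left: "sk_mul n (f + g) h = sk_mul n f h + sk_mul n g h"
  by (simp add: sk_mul_def fun_eq_iff sum.distrib[symmetric] algebra_simps)
lemma mul_add_right: "sk_mul n f (g + h) = sk_mul n f g + sk_mul n f h"
  by (simp add: sk_mul_def fun_eq_iff sum.distrib[symmetric] algebra_simps)
lemma mul_sc_left: "sk_mul n (sc c f) h = sc c (sk_mul n f h)"
  by (simp add: sk_mul_def fun_eq_iff sum_distrib_left algebra_simps)
lemma mul_sc_right: "sk_mul n f (sc c h) = sc c (sk_mul n f h)"
  by (simp add: sk_mul_def fun_eq_iff sum_distrib_left algebra_simps)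
lemma mul_0[simp]: "sk_mul n 0 h = 0" "sk_mul n f 0 = 0"
  by (simp_all add: sk_mul_def fun_eq_iff)
lemma mul_diff_left: "sk_mul n (f - g) h = sk_mul n f h - sk_mul n g h"
  by (simp add: sk_mul_def fun_eq_iff sum_subtractf[symmetric] algebra_simps)
lemma mul_diff_right: "sk_mul n f (g - h) = sk_mul n f g - sk_mul n f h"
  by (simp add: sk_mul_def fun_eq_iff sum_subtractf[symmetric] algebra_simps)
lemma mul_sum_left: "sk_mul n (\<Sum>x\<in>A. G x) h = (\<Sum>x\<in>A. sk_mul n (G x) h)"
proof (induct A rule: infinite_finite_induct)
  case (insert x B) then show ?case by (simp only: sum.insert[OF insert(1,2)] mul_add_left)
next
  case (infinite A) then show ?case by (simp only: sum.infinite[OF infinite] mul_0)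
qed (simp only: sum.empty mul_0)
lemma mul_sum_right: "sk_mul n h (\<Sum>x\<in>A. G x) = (\<Sum>x\<in>A. sk_mul n h (G x))"
proof (induct A rule: infinite_finite_induct)
  case (insert x B) then show ?case by (simp only: sum.insert[OF insert(1,2)] mul_add_right)
next
  case (infinite A)
  have "sk_mul n h 0 = 0" by (rule mul_0(2))
  then show ?case by (simp only: sum.infinite[OF infinite])
qed (simp only: sum.empty mul_0)

definition lin :: "('k::field skel \<Rightarrow> 'k skel) \<Rightarrow> bool" where
  "lin F \<longleftrightarrow> (\<forall>f g. F (f + g) = F f + F g) \<and> (\<forall>c f. F (sc c f) = sc c (F f))"

lemma lin_zero: "lin F \<Longrightarrow> F 0 = 0"
proof -
  assume "lin F"
  then have "F (sc 0 0) = sc 0 (F 0)" by (simp only: lin_def)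
  then show ?thesis by (simp only: sc_0)
qed

lemma lin_sum: "lin F \<Longrightarrow> F (\<Sum>x\<in>A. G x) = (\<Sum>x\<in>A. F (G x))"
proof (induct A rule: infinite_finite_induct)
  case (infinite A)
  have "sum G A = 0" "(\<Sum>x\<in>A. F (G x)) = 0" using infinite(1) by simp_all
  then show ?case using lin_zero[OF infinite(2)] by simp
next
  case empty
  then show ?case using lin_zero[OF empty] by simp
next
  case (insert x B)
  have "F (sum G (insert x B)) = F (G x + sum G B)" using insert(1,2) by simp
  also have "\<dots> = F (G x) + F (sum G B)" using insert(4) unfolding lin_def by blast
  also have "\<dots> = F (G x) + (\<Sum>x\<in>B. F (G x))" using insert(3)[OF insert(4)] by simp
  also have "\<dots> = (\<Sum>x\<in>insert x B. F (G x))" using insert(1,2) by simp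
  finally show ?case .
qed

lemma expand: "f \<in> skA n \<Longrightarrow> f = (\<Sum>a\<in>{a. f a \<noteq> 0}. sc (f a) (mono a))"
proof
  fix c assume f: "f \<in> skA n"
  have fin: "finite {a. f a \<noteq> 0}" using f by (simp add: skA_def)
  have "(\<Sum>a\<in>{a. f a \<noteq> 0}. sc (f a) (mono a)) c = (\<Sum>a\<in>{a. f a \<noteq> 0}. if a = c then f c else 0)"
    unfolding sum_fun_apply by (intro sum.cong) (auto simp: mono_def)
  also have "\<dots> = f c" using fin by (simp add: sum.delta)
  finally show "f c = (\<Sum>a\<in>{a. f a \<noteq> 0}. sc (f a) (mono a)) c" by simp
qed

lemma lin_ext:
  assumes "lin L" "lin R" "\<And>a. fs n a \<Longrightarrow> L (mono a) = R (mono a)" "f \<in> skA n"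
  shows "L f = R f"
proof -
  have fsa: "fs n a" if "f a \<noteq> 0" for a using assms(4) that by (auto simp: skA_def fs_def)
  have "L f = L (\<Sum>a\<in>{a. f a \<noteq> 0}. sc (f a) (mono a))" using expand[OF assms(4)] by (rule arg_cong)
  also have "\<dots> = (\<Sum>a\<in>{a. f a \<noteq> 0}. sc (f a) (L (mono a)))"
    using assms(1) by (simp add: lin_sum) (simp add: lin_def)
  also have "\<dots> = (\<Sum>a\<in>{a. f a \<noteq> 0}. sc (f a) (R (mono a)))"
    using assms(3) fsa by (intro sum.cong) auto
  also have "\<dots> = R (\<Sum>a\<in>{a. f a \<noteq> 0}. sc (f a) (mono a))"
    using assms(2) by (simp add: lin_sum) (simp add: lin_def)
  also have "\<dots> = R f" using expand[OF assms(4)] by (rule arg_cong[symmetric])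
  finally show ?thesis .
qed

lemma lin_mul_left: "lin (\<lambda>f. sk_mul n f h)"
  by (simp add: lin_def mul_add_left mul_sc_left)
lemma lin_mul_right: "lin (\<lambda>h. sk_mul n f h)"
  by (simp add: lin_def mul_add_right mul_sc_right)
lemma lin_comp: "lin F \<Longrightarrow> lin G \<Longrightarrow> lin (\<lambda>x. F (G x))"
  by (simp add: lin_def)

lemma mono_assoc:
  assumes "fs n a" "fs n b" "fs n c"
  shows "sk_mul n (sk_mul n (mono a) (mono b)) (mono c) = sk_mul n (mono a) (sk_mul n (mono b) (mono c))"
  using assms
  by (simp add: mul_mono mul_sc_left mul_sc_right sc_sc sign_cocycle add.assoc)

lemma assoc:
  assumes "f \<in> skA n" "g \<in> skA n" "h \<in> skA n"
  shows "sk_mul n (sk_mul n f g) h = sk_mul n f (sk_mul n g h)"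
proof -
  have 1: "sk_mul n (sk_mul n (mono a) (mono b)) h = sk_mul n (mono a) (sk_mul n (mono b) h)"
    if "fs n a" "fs n b" for a b
  proof (rule lin_ext[where n=n and f=h and L="\<lambda>h. sk_mul n (sk_mul n (mono a) (mono b)) h"
        and R="\<lambda>h. sk_mul n (mono a) (sk_mul n (mono b) h)"])
    show "lin (\<lambda>h. sk_mul n (sk_mul n (mono a) (mono b)) h)" by (rule lin_mul_right)
    show "lin (\<lambda>h. sk_mul n (mono a) (sk_mul n (mono b) h))"
      by (rule lin_comp[OF lin_mul_right lin_mul_right])
  qed (use that assms(3) mono_assoc in auto)
  have 2: "sk_mul n (sk_mul n (mono a) g) h = sk_mul n (mono a) (sk_mul n g h)"
    if "fs n a" for a
  proof (rule lin_ext[where n=n and f=g and L="\<lambda>g. sk_mul n (sk_mul n (mono a) g) h"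
        and R="\<lambda>g. sk_mul n (mono a) (sk_mul n g h)"])
    show "lin (\<lambda>g. sk_mul n (sk_mul n (mono a) g) h)"
      by (rule lin_comp[OF lin_mul_left lin_mul_right])
    show "lin (\<lambda>g. sk_mul n (mono a) (sk_mul n g h))"
      by (rule lin_comp[OF lin_mul_right lin_mul_left])
  qed (use that assms(2) 1 in auto)
  show ?thesis
  proof (rule lin_ext[where n=n and f=f and L="\<lambda>f. sk_mul n (sk_mul n f g) h"
        and R="\<lambda>f. sk_mul n f (sk_mul n g h)"])
    show "lin (\<lambda>f. sk_mul n (sk_mul n f g) h)"
      by (rule lin_comp[OF lin_mul_left lin_mul_left])
    show "lin (\<lambda>f. sk_mul n f (sk_mul n g h))" by (rule lin_mul_left)
  qed (use assms(1) 2 in auto)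
qed



lemma mul_nz:
  assumes "sk_mul n f g c \<noteq> 0"
  shows "\<exists>a b. f a \<noteq> 0 \<and> g b \<noteq> 0 \<and> c = a + b"
proof -
  from assms obtain a where a: "a \<in> {a. \<forall>i. a i \<le> c i}"
    and t: "sk_sign n a (\<lambda>i. c i - a i) * f a * g (\<lambda>i. c i - a i) \<noteq> 0"
    unfolding sk_mul_def by (meson sum.not_neutral_contains_not_neutral)
  have "c = a + (\<lambda>i. c i - a i)" using a by (auto simp: fun_eq_iff)
  with t show ?thesis by auto
qed

lemma skA_deg_sub: "skA_deg n r \<subseteq> skA n" by (auto simp: skA_deg_def)

lemma mul_deg:
  assumes f: "f \<in> skA_deg n r" and g: "g \<in> skA_deg n s"
  shows "sk_mul n f g \<in> skA_deg n (r + s)"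
proof -
  let ?h = "sk_mul n f g"
  have sub: "{c. ?h c \<noteq> 0} \<subseteq> (\<lambda>(x, y). x + y) ` ({a. f a \<noteq> 0} \<times> {a. g a \<noteq> 0})"
  proof
    fix c assume "c \<in> {c. ?h c \<noteq> 0}"
    then obtain a b where "f a \<noteq> 0" "g b \<noteq> 0" "c = a + b" using mul_nz by blast
    then show "c \<in> (\<lambda>(x, y). x + y) ` ({a. f a \<noteq> 0} \<times> {a. g a \<noteq> 0})" by force
  qed
  have "finite {c. ?h c \<noteq> 0}"
    using f g by (intro finite_subset[OF sub] finite_imageI finite_cartesian_product)
      (auto simp: skA_deg_def skA_def)
  moreover have "(\<forall>i\<ge>n. c i = 0) \<and> (\<Sum>i<n. c i) = r + s" if hc: "?h c \<noteq> 0" for c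
  proof -
    obtain a b where ab: "f a \<noteq> 0" "g b \<noteq> 0" "c = a + b" using mul_nz[OF hc] by blast
    have "\<forall>i\<ge>n. a i = 0" "\<forall>i\<ge>n. b i = 0" "(\<Sum>i<n. a i) = r" "(\<Sum>i<n. b i) = s"
      using ab f g by (auto simp: skA_deg_def skA_def)
    then show ?thesis using ab(3) by (simp add: sum.distrib)
  qed
  ultimately show ?thesis by (auto simp: skA_deg_def skA_def)
qed

lemma mul_skA:
  assumes f: "f \<in> skA n" and g: "g \<in> skA n"
  shows "sk_mul n f g \<in> skA n"
proof -
  let ?h = "sk_mul n f g"
  have sub: "{c. ?h c \<noteq> 0} \<subseteq> (\<lambda>(x, y). x + y) ` ({a. f a \<noteq> 0} \<times> {a. g a \<noteq> 0})"
  proof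
    fix c assume "c \<in> {c. ?h c \<noteq> 0}"
    then obtain a b where "f a \<noteq> 0" "g b \<noteq> 0" "c = a + b" using mul_nz by blast
    then show "c \<in> (\<lambda>(x, y). x + y) ` ({a. f a \<noteq> 0} \<times> {a. g a \<noteq> 0})" by force
  qed
  have "finite {c. ?h c \<noteq> 0}"
    using f g by (intro finite_subset[OF sub] finite_imageI finite_cartesian_product)
      (auto simp: skA_def)
  moreover have "\<forall>i\<ge>n. c i = 0" if hc: "?h c \<noteq> 0" for c
  proof -
    obtain a b where ab: "f a \<noteq> 0" "g b \<noteq> 0" "c = a + b" using mul_nz[OF hc] by blast
    have "\<forall>i\<ge>n. a i = 0" "\<forall>i\<ge>n. b i = 0"
      using ab f g by (auto simp: skA_def)
    then show ?thesis using ab(3) by simp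
  qed
  ultimately show ?thesis by (auto simp: skA_def)
qed

lemma skA_add: "f \<in> skA n \<Longrightarrow> g \<in> skA n \<Longrightarrow> f + g \<in> skA n"
proof -
  assume f: "f \<in> skA n" and g: "g \<in> skA n"
  have "{a. (f + g) a \<noteq> 0} \<subseteq> {a. f a \<noteq> 0} \<union> {a. g a \<noteq> 0}" by auto
  then have "finite {a. (f + g) a \<noteq> 0}" using f g by (auto simp: skA_def intro: finite_subset)
  then show ?thesis using f g unfolding skA_def by auto (metis add.left_neutral)
qed

lemma skA_deg_add: "f \<in> skA_deg n r \<Longrightarrow> g \<in> skA_deg n r \<Longrightarrow> f + g \<in> skA_deg n r"
  using skA_add[of f n g] by (auto simp: skA_deg_def) (metis add.left_neutral)

lemma skA_sc: "f \<in> skA n \<Longrightarrow> sc c f \<in> skA n"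
proof -
  assume f: "f \<in> skA n"
  have "{a. sc c f a \<noteq> 0} \<subseteq> {a. f a \<noteq> 0}" by auto
  then show ?thesis using f unfolding skA_def by (auto intro: finite_subset)
qed

lemma skA_deg_sc: "f \<in> skA_deg n r \<Longrightarrow> sc c f \<in> skA_deg n r"
  using skA_sc[of f n c] by (auto simp: skA_deg_def)

lemma skA_deg_zero: "0 \<in> skA_deg n r"
  by (simp add: skA_deg_def skA_def)

lemma skA_deg_sum: "(\<And>x. x \<in> A \<Longrightarrow> F x \<in> skA_deg n r) \<Longrightarrow> (\<Sum>x\<in>A. F x) \<in> skA_deg n r"
  by (induct A rule: infinite_finite_induct) (auto simp: skA_deg_zero skA_deg_add)

lemma skA_deg_diff: "f \<in> skA_deg n r \<Longrightarrow> g \<in> skA_deg n r \<Longrightarrow> f - g \<in> skA_deg n r"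
proof -
  assume "f \<in> skA_deg n r" "g \<in> skA_deg n r"
  then have "f + sc (-1) g \<in> skA_deg n r" by (intro skA_deg_add skA_deg_sc)
  moreover have "f + sc (-1) g = f - g" by (simp add: fun_eq_iff)
  ultimately show ?thesis by simp
qed

lemma mono_deg: "fs n a \<Longrightarrow> mono a \<in> skA_deg n (\<Sum>i<n. a i)"
  by (auto simp: skA_deg_def skA_def mono_def fs_def)

lemma sk_one_mono: "sk_one = mono 0"
  by (simp add: sk_one_def mono_def fun_eq_iff zero_fun_def)

lemma fs_0[simp]: "fs n 0" by (simp add: fs_def)

lemma one_deg: "sk_one \<in> skA_deg n 0"
  using mono_deg[of n 0] by (simp add: sk_one_mono)

lemma sign_0: "sk_sign n 0 a = 1" "sk_sign n a 0 = 1"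
  by (simp_all add: sk_sign_def)

lemma mul_one_left: "f \<in> skA n \<Longrightarrow> sk_mul n sk_one f = f"
proof (rule lin_ext[where n=n and L="\<lambda>f. sk_mul n sk_one f" and R="\<lambda>f. f" and f=f])
  show "lin (\<lambda>f. sk_mul n sk_one f)" by (rule lin_mul_right)
  show "lin (\<lambda>f. f)" by (simp add: lin_def)
  fix a assume "fs n a" then show "sk_mul n sk_one (mono a) = mono a"
    by (simp add: sk_one_mono mul_mono sign_0)
qed

lemma mul_one_right: "f \<in> skA n \<Longrightarrow> sk_mul n f sk_one = f"
proof (rule lin_ext[where n=n and L="\<lambda>f. sk_mul n f sk_one" and R="\<lambda>f. f" and f=f])
  show "lin (\<lambda>f. sk_mul n f sk_one)" by (rule lin_mul_left)
  show "lin (\<lambda>f. f)" by (simp add: lin_def)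
  fix a assume "fs n a" then show "sk_mul n (mono a) sk_one = mono a"
    by (simp add: sk_one_mono mul_mono sign_0)
qed

lemma prod_skA: "(\<And>x. x \<in> set xs \<Longrightarrow> x \<in> skA n) \<Longrightarrow> sk_prod n xs \<in> skA n"
  by (induct xs) (auto simp: sk_prod_def intro: mul_skA skA_deg_sub[THEN subsetD] one_deg)

lemma prod_append:
  assumes "\<And>x. x \<in> set xs \<Longrightarrow> x \<in> skA n" "\<And>x. x \<in> set ys \<Longrightarrow> x \<in> skA n"
  shows "sk_prod n (xs @ ys) = sk_mul n (sk_prod n xs) (sk_prod n ys)"
  using assms(1)
proof (induct xs)
  case Nil
  then show ?case using prod_skA[OF assms(2)] by (simp add: sk_prod_def mul_one_left)
next
  case (Cons x xs)
  have "sk_prod n ((x # xs) @ ys) = sk_mul n x (sk_prod n (xs @ ys))" by (simp add: sk_prod_def)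
  also have "\<dots> = sk_mul n x (sk_mul n (sk_prod n xs) (sk_prod n ys))" using Cons by simp
  also have "\<dots> = sk_mul n (sk_mul n x (sk_prod n xs)) (sk_prod n ys)"
    using Cons(2) prod_skA[of xs n] prod_skA[OF assms(2)] by (simp add: assoc)
  finally show ?case by (simp add: sk_prod_def)
qed

lemma pow_Suc: "sk_pow n f (Suc k) = sk_mul n f (sk_pow n f k)"
  by (simp add: sk_pow_def)
lemma pow_0: "sk_pow n f 0 = sk_one"
  by (simp add: sk_pow_def)

lemma pow_deg: "f \<in> skA_deg n d \<Longrightarrow> sk_pow n f k \<in> skA_deg n (k * d)"
  by (induct k) (auto simp: pow_0 pow_Suc one_deg dest: mul_deg)

lemma pow_1: "f \<in> skA n \<Longrightarrow> sk_pow n f 1 = f"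
  by (simp add: pow_Suc pow_0 mul_one_right)



definition e :: "nat \<Rightarrow> nat \<Rightarrow> nat" where
  "e i = (\<lambda>j. if j = i then 1 else 0)"

lemma fs_e: "i < n \<Longrightarrow> fs n (e i)"
  by (simp add: fs_def e_def)

lemma sk_x_mono: "sk_x i = mono (e i)"
  by (simp add: sk_x_def mono_def e_def fun_eq_iff)

lemma b_expand: "sk_b n w g = (\<Sum>i<n. sc (w ^ (i * g) / of_nat n) (mono (e i)))"
proof
  fix a
  show "sk_b n w g a = (\<Sum>i<n. sc (w ^ (i * g) / of_nat n) (mono (e i))) a"
    unfolding sum_fun_apply sk_b_def sk_x_mono
    by (simp add: sum_distrib_left)
qed

lemma sign_e:
  assumes "i < n" "l < n"
  shows "sk_sign n (e i) (e l) = (if l < i then -1 else (1::'k::field))"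
proof -
  have "(\<Sum>p<n. \<Sum>q<p. e i p * e l q) = (\<Sum>p<n. if p = i then (\<Sum>q<p. e l q) else 0)"
    by (rule sum.cong) (auto simp: e_def)
  also have "\<dots> = (\<Sum>q<i. e l q)" using assms by (simp add: sum.delta)
  also have "\<dots> = (\<Sum>q<i. if q = l then 1 else 0)" by (simp add: e_def)
  also have "\<dots> = (if l < i then 1 else 0)" by (simp add: sum.delta)
  finally show ?thesis by (simp add: sk_sign_def)
qed

lemma sign_even:
  assumes "\<forall>i. even (a i)"
  shows "sk_sign n a b = (1::'k::field)" "sk_sign n b a = (1::'k::field)"
proof -
  have "even (\<Sum>p<n. \<Sum>q<p. a p * b q)" using assms by (intro dvd_sum) simp
  then show "sk_sign n a b = (1::'k::field)" by (simp add: sk_sign_def)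
  have "even (\<Sum>p<n. \<Sum>q<p. b p * a q)" using assms by (intro dvd_sum) simp
  then show "sk_sign n b a = (1::'k::field)" by (simp add: sk_sign_def)
qed

definition Q :: "nat \<Rightarrow> (nat \<Rightarrow> nat \<Rightarrow> 'k::field) \<Rightarrow> 'k skel" where
  "Q n k = (\<Sum>i<n. \<Sum>l<n. sc (k i l) (mono (e i + e l)))"

lemma Q_swap: "Q n k = Q n (\<lambda>i l. k l i)"
  unfolding Q_def by (subst sum.swap) (simp add: add.commute)

lemma Q_add: "Q n k1 + Q n k2 = Q n (\<lambda>i l. k1 i l + k2 i l)"
  unfolding Q_def by (simp add: sum.distrib[symmetric] sc_add2)

lemma Q_diag:
  assumes "\<And>i l. i < n \<Longrightarrow> l < n \<Longrightarrow> i \<noteq> l \<Longrightarrow> k i l = 0"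
  shows "Q n k = (\<Sum>i<n. sc (k i i) (mono (e i + e i)))"
  unfolding Q_def
proof (rule sum.cong[OF refl])
  fix i assume i: "i \<in> {..<n}"
  have "(\<Sum>l<n. sc (k i l) (mono (e i + e l))) = (\<Sum>l<n. if l = i then sc (k i i) (mono (e i + e i)) else 0)"
    using assms i by (intro sum.cong) auto
  also have "\<dots> = sc (k i i) (mono (e i + e i))" using i by (simp add: sum.delta')
  finally show "(\<Sum>l<n. sc (k i l) (mono (e i + e l))) = sc (k i i) (mono (e i + e i))" .
qed

lemma mul_sc_mono: "fs n a \<Longrightarrow> fs n b \<Longrightarrow>
   sk_mul n (sc x (mono a)) (sc y (mono b)) = sc (x * y * sk_sign n a b) (mono (a + b))"
  by (simp add: mul_sc_left mul_sc_right mul_mono sc_sc mult.commute mult.left_commute)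

lemma b_mul: "sk_mul n (sk_b n w k) (sk_b n w m) =
  Q n (\<lambda>i l. w ^ (i * k) / of_nat n * (w ^ (l * m) / of_nat n) * sk_sign n (e i) (e l))"
  unfolding b_expand Q_def
  apply (subst mul_sum_left)
  apply (intro sum.cong refl)
  apply (subst mul_sum_right)
  apply (intro sum.cong refl)
  apply (simp add: mul_sc_mono fs_e)
  done

lemma omega_mod: "w ^ n = (1::'k::field) \<Longrightarrow> w ^ x = w ^ (x mod n)"
proof -
  assume w: "w ^ n = 1"
  have "w ^ x = w ^ (n * (x div n) + x mod n)" by simp
  also have "\<dots> = (w ^ n) ^ (x div n) * w ^ (x mod n)" by (simp only: power_add power_mult)
  finally show ?thesis using w by simp
qed

definition C :: "nat \<Rightarrow> 'k::field \<Rightarrow> nat \<Rightarrow> 'k skel" where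
  "C n w j = (\<Sum>i<n. sc (2 * w ^ (i * j) / (of_nat n)^2) (mono (e i + e i)))"

lemma idx_lemma: "g < (n::nat) \<Longrightarrow> x < n \<Longrightarrow> ((g + x) mod n + n - g) mod n = x"
proof -
  assume a: "g < n" "x < n"
  show ?thesis
  proof (cases "g + x < n")
    case True
    then have "(g + x) mod n = g + x" by simp
    then have "(g + x) mod n + n - g = x + n" by simp
    then show ?thesis using a by simp
  next
    case False
    then have "(g + x) mod n = g + x - n" using a by (simp add: le_mod_geq)
    then show ?thesis using a False by simp
  qed
qed

lemma c_formula:
  assumes w: "w ^ n = (1::'k::field)" and j: "j < n" and k: "k < n"
  shows "sk_c n w j k = C n w j"
proof -
  let ?m = "(j + n - k) mod n"
  let ?a = "\<lambda>i. w ^ (i * k) / of_nat n" and ?b = "\<lambda>i. w ^ (i * ?m) / of_nat n"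
  let ?s = "\<lambda>i l. sk_sign n (e i) (e l) :: 'k"
  have "sk_c n w j k = Q n (\<lambda>i l. ?a i * ?b l * ?s i l) + Q n (\<lambda>i l. ?b i * ?a l * ?s i l)"
    unfolding sk_c_def sk_add_eq b_mul by simp
  also have "\<dots> = Q n (\<lambda>i l. ?a i * ?b l * ?s i l) + Q n (\<lambda>i l. ?b l * ?a i * ?s l i)"
    by (subst (2) Q_swap) simp
  also have "\<dots> = Q n (\<lambda>i l. ?a i * ?b l * ?s i l + ?b l * ?a i * ?s l i)"
    by (rule Q_add)
  also have "\<dots> = (\<Sum>i<n. sc (?a i * ?b i * ?s i i + ?b i * ?a i * ?s i i) (mono (e i + e i)))"
    by (rule Q_diag) (auto simp: sign_e algebra_simps)
  also have "\<dots> = C n w j"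
    unfolding C_def
  proof (intro sum.cong refl arg_cong2[where f=sc])
    fix i assume i: "i \<in> {..<n}"
    have km: "(k + ?m) mod n = j"
    proof -
      have "(k + ?m) mod n = (k + (j + n - k)) mod n" by (simp add: mod_add_right_eq)
      also have "k + (j + n - k) = j + n" using k by simp
      finally show ?thesis using j by simp
    qed
    have "w ^ (i * k) * w ^ (i * ?m) = w ^ (i * (k + ?m))" by (simp add: power_add distrib_left)
    also have "\<dots> = w ^ ((i * (k + ?m)) mod n)" by (rule omega_mod[OF w])
    also have "(i * (k + ?m)) mod n = (i * j) mod n" using km by (metis mod_mult_right_eq)
    also have "w ^ ((i * j) mod n) = w ^ (i * j)" by (rule omega_mod[OF w, symmetric])
    finally have ww: "w ^ (i * k) * w ^ (i * ?m) = w ^ (i * j)" .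
    have s: "?s i i = 1" using i by (simp add: sign_e)
    show "?a i * ?b i * ?s i i + ?b i * ?a i * ?s i i = 2 * w ^ (i * j) / (of_nat n)^2"
      unfolding s using ww by (simp add: power2_eq_square field_simps)
  qed
  finally show ?thesis .
qed

lemma C_deg: "C n w j \<in> skA_deg n 2"
  unfolding C_def
proof (intro skA_deg_sum skA_deg_sc)
  fix i assume "i \<in> {..<n}"
  then have "fs n (e i + e i)" by (simp add: fs_e)
  moreover have "(\<Sum>x<n. (e i + e i) x) = 2" using \<open>i \<in> {..<n}\<close>
    by (simp add: e_def sum.distrib)
  ultimately show "mono (e i + e i) \<in> skA_deg n 2" using mono_deg by metis
qed

lemma C_central:
  assumes f: "f \<in> skA n"
  shows "sk_mul n (C n w j) f = sk_mul n f (C n w j)"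
proof -
  have cm: "sk_mul n (mono (e i + e i)) f = sk_mul n f (mono (e i + e i))" if i: "i < n" for i
  proof (rule lin_ext[where n=n and f=f and L="\<lambda>f. sk_mul n (mono (e i + e i)) f"
        and R="\<lambda>f. sk_mul n f (mono (e i + e i))"])
    show "lin (\<lambda>f. sk_mul n (mono (e i + e i)) f)" by (rule lin_mul_right)
    show "lin (\<lambda>f. sk_mul n f (mono (e i + e i)))" by (rule lin_mul_left)
    show "f \<in> skA n" by (rule f)
    fix a assume a: "fs n a"
    have ev: "\<forall>x. even ((e i + e i) x)" by simp
    show "sk_mul n (mono (e i + e i)) (mono a) = sk_mul n (mono a) (mono (e i + e i))"
      using a i by (simp add: mul_mono fs_e sign_even[OF ev] add.commute)
  qed
  show ?thesis unfolding C_def mul_sum_left mul_sum_right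
    by (intro sum.cong refl) (simp add: mul_sc_left mul_sc_right cm)
qed



definition bprod :: "nat \<Rightarrow> 'k::field \<Rightarrow> nat list \<Rightarrow> 'k skel" where
  "bprod n w L = sk_prod n (map (sk_b n w) L)"

definition cpart :: "nat \<Rightarrow> 'k::field \<Rightarrow> (nat \<Rightarrow> nat) \<Rightarrow> 'k skel" where
  "cpart n w jv = sk_prod n (map (\<lambda>g. sk_pow n (sk_c n w g 0) (jv g)) [0..<n])"

definition H :: "nat \<Rightarrow> 'k::field \<Rightarrow> nat list \<Rightarrow> nat \<Rightarrow> nat \<Rightarrow> 'k skel set" where
  "H n w L g d = {sk_mul n (bprod n w L') (cpart n w jv') | L' jv'. sorted_wrt (<) L'
     \<and> set L' \<subseteq> insert g (set L) \<and> (\<forall>s\<ge>n. jv' s = 0) \<and> length L' + 2 * (\<Sum>s<n. jv' s) = d}"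

definition G :: "nat \<Rightarrow> 'k::field \<Rightarrow> nat \<Rightarrow> 'k skel set" where
  "G n w d = {sk_mul n (bprod n w L) (cpart n w jv) | L jv. sorted_wrt (<) L
     \<and> set L \<subseteq> {..<n} \<and> (\<forall>s\<ge>n. jv s = 0) \<and> length L + 2 * (\<Sum>s<n. jv s) = d}"

lemma prod_map_deg:
  "(\<And>x. x \<in> set xs \<Longrightarrow> F x \<in> skA_deg n (D x)) \<Longrightarrow> sk_prod n (map F xs) \<in> skA_deg n (sum_list (map D xs))"
  by (induct xs) (auto simp: sk_prod_def one_deg intro: mul_deg)

lemma b_deg: "sk_b n w g \<in> skA_deg n 1"
  unfolding b_expand
proof (intro skA_deg_sum skA_deg_sc)
  fix i assume i: "i \<in> {..<n}"
  have "(\<Sum>x<n. e i x) = 1" using i by (simp add: e_def)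
  then show "mono (e i) \<in> skA_deg n 1" using mono_deg[OF fs_e[of i n]] i by simp
qed

lemma b_skA: "sk_b n w g \<in> skA n" using b_deg skA_deg_sub by blast

lemma bprod_deg: "bprod n w L \<in> skA_deg n (length L)"
proof -
  have "sk_prod n (map (sk_b n w) L) \<in> skA_deg n (sum_list (map (\<lambda>_. 1) L))"
    by (rule prod_map_deg) (rule b_deg)
  then show ?thesis by (simp add: sum_list_triv bprod_def)
qed

lemma bprod_Cons: "bprod n w (i # L) = sk_mul n (sk_b n w i) (bprod n w L)"
  by (simp add: bprod_def sk_prod_def)

lemma bb_deg: "sk_mul n (sk_b n w g) (sk_b n w' g') \<in> skA_deg n 2"
  by (metis mul_deg b_deg one_add_one)

lemma prod_Cons: "sk_prod n (x # xs) = sk_mul n x (sk_prod n xs)"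
  by (simp add: sk_prod_def)

lemma bprod_skA: "bprod n w L \<in> skA n" using bprod_deg skA_deg_sub by blast

context
  fixes n :: nat and w :: "'k::field_char_0"
  assumes wn: "w ^ n = 1" and n0: "0 < n"
begin

lemma cc_eq: "j < n \<Longrightarrow> k < n \<Longrightarrow> sk_c n w j k = sk_c n w j 0"
  using c_formula[OF wn] n0 by simp

lemma cc_deg: "j < n \<Longrightarrow> sk_c n w j 0 \<in> skA_deg n 2"
  using c_formula[OF wn _ n0] C_deg by simp

lemma cc_skA: "j < n \<Longrightarrow> sk_c n w j 0 \<in> skA n"
  using cc_deg skA_deg_sub by blast

lemma cc_central: "j < n \<Longrightarrow> f \<in> skA n \<Longrightarrow> sk_mul n (sk_c n w j 0) f = sk_mul n f (sk_c n w j 0)"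
  using c_formula[OF wn _ n0] C_central by simp

lemma cpart_deg: "cpart n w jv \<in> skA_deg n (2 * (\<Sum>s<n. jv s))"
proof -
  have "cpart n w jv \<in> skA_deg n (sum_list (map (\<lambda>g. jv g * 2) [0..<n]))"
    unfolding cpart_def by (rule prod_map_deg) (auto intro: pow_deg cc_deg)
  moreover have "sum_list (map (\<lambda>g. jv g * 2) [0..<n]) = 2 * (\<Sum>s<n. jv s)"
    by (simp add: interv_sum_list_conv_sum_set_nat atLeast0LessThan sum_distrib_left mult.commute)
  ultimately show ?thesis by simp
qed

lemma cpart_skA: "cpart n w jv \<in> skA n" using cpart_deg skA_deg_sub by blast

lemma central_prod:
  assumes z: "z \<in> skA n" "\<And>f. f \<in> skA n \<Longrightarrow> sk_mul n z f = sk_mul n f z"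
    and F: "\<And>x. F x \<in> skA n" and d: "distinct xs" and j: "j \<in> set xs"
  shows "sk_mul n z (sk_prod n (map F xs)) = sk_prod n (map (F(j := sk_mul n z (F j))) xs)"
  using d j
proof (induct xs)
  case Nil then show ?case by simp
next
  case (Cons y ys)
  have P: "sk_prod n (map F ys) \<in> skA n" by (rule prod_skA) (auto intro: F)
  show ?case
  proof (cases "y = j")
    case True
    then have "j \<notin> set ys" using Cons by simp
    then have m: "map (F(j := sk_mul n z (F j))) ys = map F ys" by (intro map_cong) auto
    have "sk_mul n z (sk_prod n (map F (y # ys))) = sk_mul n z (sk_mul n (F j) (sk_prod n (map F ys)))"
      using True by (simp add: sk_prod_def)
    also have "\<dots> = sk_mul n (sk_mul n z (F j)) (sk_prod n (map F ys))"
      by (rule assoc[OF z(1) F P, symmetric])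
    also have "\<dots> = sk_prod n (map (F(j := sk_mul n z (F j))) (y # ys))"
      by (simp only: list.map prod_Cons m True fun_upd_same)
    finally show ?thesis .
  next
    case False
    then have jy: "j \<in> set ys" "distinct ys" using Cons by auto
    have "sk_mul n z (sk_prod n (map F (y # ys))) = sk_mul n z (sk_mul n (F y) (sk_prod n (map F ys)))"
      by (simp add: sk_prod_def)
    also have "\<dots> = sk_mul n (sk_mul n z (F y)) (sk_prod n (map F ys))"
      by (rule assoc[OF z(1) F P, symmetric])
    also have "\<dots> = sk_mul n (sk_mul n (F y) z) (sk_prod n (map F ys))"
      using z(2)[OF F] by simp
    also have "\<dots> = sk_mul n (F y) (sk_mul n z (sk_prod n (map F ys)))"
      by (rule assoc[OF F z(1) P])
    also have "\<dots> = sk_mul n (F y) (sk_prod n (map (F(j := sk_mul n z (F j))) ys))"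
      by (simp only: Cons(1)[OF jy(2) jy(1)])
    also have "\<dots> = sk_prod n (map (F(j := sk_mul n z (F j))) (y # ys))"
      by (simp only: list.map prod_Cons fun_upd_other[OF False])
    finally show ?thesis .
  qed
qed

lemma cmul:
  assumes j: "j < n"
  shows "sk_mul n (sk_c n w j 0) (cpart n w jv) = cpart n w (jv(j := Suc (jv j)))"
proof -
  let ?F = "\<lambda>g. sk_pow n (sk_c n w g 0) (jv g)"
  have F: "?F g \<in> skA n" for g
  proof (cases "g < n")
    case True then show ?thesis using pow_deg[OF cc_deg[OF True]] skA_deg_sub by blast
  next
    case False
    have "sk_c n w g 0 \<in> skA_deg n 2" unfolding sk_c_def sk_add_eq
      by (intro skA_deg_add bb_deg)
    then show ?thesis using pow_deg skA_deg_sub by blast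
  qed
  have "sk_mul n (sk_c n w j 0) (cpart n w jv) = sk_prod n (map (?F(j := sk_mul n (sk_c n w j 0) (?F j))) [0..<n])"
    unfolding cpart_def
    by (rule central_prod[OF cc_skA[OF j] cc_central[OF j] F]) (use j in auto)
  also have "?F(j := sk_mul n (sk_c n w j 0) (?F j)) = (\<lambda>g. sk_pow n (sk_c n w g 0) ((jv(j := Suc (jv j))) g))"
    by (auto simp: fun_eq_iff pow_Suc)
  finally show ?thesis unfolding cpart_def .
qed

lemma bsq:
  assumes g: "g < n"
  shows "sk_mul n (sk_b n w g) (sk_b n w g) = sc (1/2) (sk_c n w ((g + g) mod n) 0)"
proof -
  have "sk_c n w ((g + g) mod n) g = sk_mul n (sk_b n w g) (sk_b n w g) + sk_mul n (sk_b n w g) (sk_b n w g)"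
    unfolding sk_c_def sk_add_eq idx_lemma[OF g g] ..
  moreover have "sk_c n w ((g + g) mod n) g = sk_c n w ((g + g) mod n) 0"
    using g n0 by (intro cc_eq) auto
  ultimately show ?thesis by (auto simp: fun_eq_iff field_simps dest: fun_cong)
qed

lemma banti:
  assumes g: "g < n" and i: "i < n"
  shows "sk_mul n (sk_b n w g) (sk_b n w i) = sk_c n w ((g + i) mod n) 0 - sk_mul n (sk_b n w i) (sk_b n w g)"
proof -
  have "sk_c n w ((g + i) mod n) g = sk_mul n (sk_b n w g) (sk_b n w i) + sk_mul n (sk_b n w i) (sk_b n w g)"
    unfolding sk_c_def sk_add_eq idx_lemma[OF g i] ..
  moreover have "sk_c n w ((g + i) mod n) g = sk_c n w ((g + i) mod n) 0"
    using g n0 by (intro cc_eq) auto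
  ultimately show ?thesis by (simp add: algebra_simps)
qed

lemma span_mul:
  assumes "y \<in> V.span S" "\<And>s. s \<in> S \<Longrightarrow> sk_mul n x s \<in> V.span T"
  shows "sk_mul n x y \<in> V.span T"
  using assms(1)
proof (induct rule: V.span_induct_alt)
  case base then show ?case using V.span_zero[of T] by (simp only: mul_0)
next
  case (step c s y)
  have eq: "sk_mul n x (sc c s + y) = sc c (sk_mul n x s) + sk_mul n x y"
    by (simp only: mul_add_right mul_sc_right)
  have "sc c (sk_mul n x s) + sk_mul n x y \<in> V.span T"
    by (intro V.span_add V.span_scale assms(2) step)
  then show ?case by (simp only: eq)
qed

lemma sum_upd: "j < n \<Longrightarrow> (\<Sum>s<n. (jv(j := Suc (jv j))) s) = Suc (\<Sum>s<n. jv s)"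
proof -
  assume j: "j < n"
  have "(\<Sum>s<n. (jv(j := Suc (jv j))) s) = (\<Sum>s<n. jv s + (if s = j then 1 else 0))"
    by (intro sum.cong) auto
  also have "\<dots> = (\<Sum>s<n. jv s) + 1" using j by (simp add: sum.distrib)
  finally show ?thesis by simp
qed

lemma key:
  assumes "sorted_wrt (<) L" "set L \<subseteq> {..<n}" "g < n" "\<forall>s\<ge>n. jv s = 0"
  shows "sk_mul n (sk_b n w g) (sk_mul n (bprod n w L) (cpart n w jv))
         \<in> V.span (H n w L g (length L + 1 + 2 * (\<Sum>s<n. jv s)))"
  using assms
proof (induct L arbitrary: g jv)
  case Nil
  have "sk_mul n (sk_b n w g) (sk_mul n (bprod n w []) (cpart n w jv)) = sk_mul n (bprod n w [g]) (cpart n w jv)"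
    by (simp add: bprod_def sk_prod_def mul_one_left mul_one_right cpart_skA b_skA)
  also have "\<dots> \<in> H n w [] g (length [] + 1 + 2 * (\<Sum>s<n. jv s))"
    unfolding H_def using Nil by (intro CollectI exI[of _ "[g]"] exI[of _ jv]) simp
  finally show ?case by (rule V.span_base)
next
  case (Cons i L)
  let ?X = "sk_mul n (bprod n w L) (cpart n w jv)"
  let ?d = "length (i # L) + 1 + 2 * (\<Sum>s<n. jv s)"
  have iL: "\<forall>y\<in>set L. i < y" "sorted_wrt (<) L" "i < n" "set L \<subseteq> {..<n}" using Cons.prems by auto
  have X: "?X \<in> skA n" by (intro mul_skA bprod_skA cpart_skA)
  have e1: "sk_mul n (bprod n w (i # L)) (cpart n w jv) = sk_mul n (sk_b n w i) ?X"
    by (simp only: bprod_Cons assoc[OF b_skA bprod_skA cpart_skA])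
  have cX: "sk_mul n (sk_c n w j 0) ?X = sk_mul n (bprod n w L) (cpart n w (jv(j := Suc (jv j))))"
    if j: "j < n" for j
  proof -
    have "sk_mul n (sk_c n w j 0) ?X = sk_mul n (sk_mul n (sk_c n w j 0) (bprod n w L)) (cpart n w jv)"
      by (simp add: assoc cc_skA j bprod_skA cpart_skA)
    also have "\<dots> = sk_mul n (sk_mul n (bprod n w L) (sk_c n w j 0)) (cpart n w jv)"
      by (simp add: cc_central j bprod_skA)
    also have "\<dots> = sk_mul n (bprod n w L) (sk_mul n (sk_c n w j 0) (cpart n w jv))"
      by (simp add: assoc cc_skA j bprod_skA cpart_skA)
    finally show ?thesis by (simp add: cmul j)
  qed
  have HL: "sk_mul n (bprod n w L) (cpart n w (jv(j := Suc (jv j)))) \<in> H n w (i # L) g ?d"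
    if j: "j < n" for j
  proof -
    have su: "(\<Sum>s<n. (jv(j := Suc (jv j))) s) = Suc (\<Sum>s<n. jv s)" by (rule sum_upd[OF j])
    show ?thesis
      unfolding H_def using j iL Cons.prems(4) su
      by (intro CollectI exI[of _ L] exI[of _ "jv(j := Suc (jv j))"]) auto
  qed
  have bbX: "sk_mul n (sk_b n w g) (sk_mul n (sk_b n w i) ?X) = sk_mul n (sk_mul n (sk_b n w g) (sk_b n w i)) ?X"
    by (simp add: assoc b_skA X)
  consider "g < i" | "g = i" | "i < g" by linarith
  then show ?case
  proof cases
    case 1
    have "sk_mul n (sk_b n w g) (sk_mul n (bprod n w (i # L)) (cpart n w jv)) = sk_mul n (bprod n w (g # i # L)) (cpart n w jv)"
      by (simp only: bprod_Cons assoc[OF b_skA bprod_skA cpart_skA] assoc[OF b_skA b_skA mul_skA[OF bprod_skA cpart_skA]]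
            assoc[OF b_skA mul_skA[OF b_skA bprod_skA] cpart_skA])
    also have "\<dots> \<in> H n w (i # L) g ?d"
      unfolding H_def using 1 iL Cons.prems
      by (intro CollectI exI[of _ "g # i # L"] exI[of _ jv]) auto
    finally show ?thesis by (rule V.span_base)
  next
    case 2
    have "sk_mul n (sk_b n w g) (sk_mul n (bprod n w (i # L)) (cpart n w jv))
        = sc (1/2) (sk_mul n (sk_c n w ((i + i) mod n) 0) ?X)"
      unfolding e1 bbX using 2 iL by (simp add: bsq mul_sc_left)
    also have "\<dots> = sc (1/2) (sk_mul n (bprod n w L) (cpart n w (jv((i + i) mod n := Suc (jv ((i + i) mod n))))))"
      using n0 by (simp add: cX)
    also have "\<dots> \<in> V.span (H n w (i # L) g ?d)"
      by (intro V.span_scale V.span_base HL) (use n0 in simp)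
    finally show ?thesis .
  next
    case 3
    let ?j = "(g + i) mod n"
    have j: "?j < n" using n0 by simp
    have "sk_mul n (sk_b n w g) (sk_mul n (bprod n w (i # L)) (cpart n w jv))
        = sk_mul n (sk_c n w ?j 0) ?X - sk_mul n (sk_mul n (sk_b n w i) (sk_b n w g)) ?X"
      unfolding e1 bbX by (simp only: banti[OF Cons.prems(3) iL(3)] mul_diff_left)
    also have "\<dots> = sk_mul n (bprod n w L) (cpart n w (jv(?j := Suc (jv ?j))))
        - sk_mul n (sk_b n w i) (sk_mul n (sk_b n w g) ?X)"
      by (simp add: cX j assoc b_skA X)
    also have "\<dots> \<in> V.span (H n w (i # L) g ?d)"
    proof (rule V.span_diff)
      show "sk_mul n (bprod n w L) (cpart n w (jv(?j := Suc (jv ?j)))) \<in> V.span (H n w (i # L) g ?d)"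
        using HL[OF j] by (rule V.span_base)
      have IH: "sk_mul n (sk_b n w g) ?X \<in> V.span (H n w L g (length L + 1 + 2 * (\<Sum>s<n. jv s)))"
        using Cons.hyps iL Cons.prems by blast
      show "sk_mul n (sk_b n w i) (sk_mul n (sk_b n w g) ?X) \<in> V.span (H n w (i # L) g ?d)"
      proof (rule span_mul[OF IH])
        fix s assume "s \<in> H n w L g (length L + 1 + 2 * (\<Sum>s<n. jv s))"
        then obtain L' jv' where s: "s = sk_mul n (bprod n w L') (cpart n w jv')"
          and L': "sorted_wrt (<) L'" "set L' \<subseteq> insert g (set L)" "\<forall>s\<ge>n. jv' s = 0"
            "length L' + 2 * (\<Sum>s<n. jv' s) = length L + 1 + 2 * (\<Sum>s<n. jv s)"
          unfolding H_def by blast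
        have "sk_mul n (sk_b n w i) s = sk_mul n (bprod n w (i # L')) (cpart n w jv')"
          unfolding s by (simp only: bprod_Cons assoc[OF b_skA bprod_skA cpart_skA])
        also have "\<dots> \<in> H n w (i # L) g ?d"
          unfolding H_def using L' 3 iL
          by (intro CollectI exI[of _ "i # L'"] exI[of _ jv']) auto
        finally show "sk_mul n (sk_b n w i) s \<in> V.span (H n w (i # L) g ?d)" by (rule V.span_base)
      qed
    qed
    finally show ?thesis .
  qed
qed

lemma H_G: "set L \<subseteq> {..<n} \<Longrightarrow> g < n \<Longrightarrow> H n w L g d \<subseteq> G n w d"
  unfolding H_def G_def by blast

lemma key2:
  assumes "x \<in> G n w d" "g < n"
  shows "sk_mul n (sk_b n w g) x \<in> V.span (G n w (Suc d))"
proof -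
  obtain L jv where x: "x = sk_mul n (bprod n w L) (cpart n w jv)" and L: "sorted_wrt (<) L"
    "set L \<subseteq> {..<n}" "\<forall>s\<ge>n. jv s = 0" "length L + 2 * (\<Sum>s<n. jv s) = d"
    using assms(1) unfolding G_def by blast
  have "sk_mul n (sk_b n w g) x \<in> V.span (H n w L g (length L + 1 + 2 * (\<Sum>s<n. jv s)))"
    unfolding x using key L assms(2) by blast
  also have "length L + 1 + 2 * (\<Sum>s<n. jv s) = Suc d" using L by simp
  also have "V.span (H n w L g (Suc d)) \<subseteq> V.span (G n w (Suc d))"
    using L assms(2) by (intro V.span_mono H_G) auto
  finally show ?thesis .
qed

lemma key3:
  assumes "y \<in> V.span (G n w d)" "g < n"
  shows "sk_mul n (sk_b n w g) y \<in> V.span (G n w (Suc d))"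
  using span_mul[OF assms(1)] key2 assms(2) by blast

end


lemma dvd_shift: "i < n \<Longrightarrow> l < (n::nat) \<Longrightarrow> (n dvd (n - i + l)) = (l = i)"
proof
  assume a: "i < n" "l < n" "n dvd (n - i + l)"
  then obtain k where k: "n - i + l = n * k" by (auto elim: dvdE)
  have "0 < n - i + l" using a by simp
  then have "0 < n * k" using k by simp
  then have "k \<noteq> 0" by auto
  moreover have "k < 2"
  proof (rule ccontr)
    assume "\<not> k < 2"
    then have "n * 2 \<le> n * k" by simp
    then show False using k a by linarith
  qed
  ultimately have "k = 1" by linarith
  then show "l = i" using k a by simp
next
  assume "l = i" "i < n" then show "n dvd (n - i + l)" by simp
qed

lemma one_skA: "sk_one \<in> skA n" using one_deg skA_deg_sub by blast

lemma prod_ones: "f = sk_one \<Longrightarrow> sk_prod n (map (\<lambda>_. f) xs) = sk_one"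
  by (induct xs) (auto simp: prod_Cons sk_prod_def[of n "[]"] mul_one_left one_skA)

lemma len_filter_sum: "(\<forall>x. iv x \<le> (1::nat)) \<Longrightarrow> length (filter (\<lambda>g. iv g = 1) xs) = sum_list (map iv xs)"
proof (induct xs)
  case (Cons x xs)
  then have "iv x = 0 \<or> iv x = 1" by (metis le_neq_implies_less less_one)
  then show ?case using Cons by auto
qed simp

lemma prod_pow_filter:
  "(\<forall>g. iv g \<le> (1::nat)) \<Longrightarrow> sk_prod n (map (\<lambda>g. sk_pow n (sk_b n w g) (iv g)) xs) = bprod n w (filter (\<lambda>g. iv g = 1) xs)"
proof (induct xs)
  case Nil then show ?case by (simp add: bprod_def)
next
  case (Cons x xs)
  have IH: "sk_prod n (map (\<lambda>g. sk_pow n (sk_b n w g) (iv g)) xs) = bprod n w (filter (\<lambda>g. iv g = 1) xs)"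
    using Cons by blast
  have "iv x = 0 \<or> iv x = 1" using Cons(2) by (metis le_neq_implies_less less_one)
  then show ?case
  proof
    assume "iv x = 0"
    then show ?thesis using IH by (simp add: prod_Cons pow_0 mul_one_left bprod_skA)
  next
    assume "iv x = 1"
    then show ?thesis using IH by (simp add: prod_Cons pow_Suc pow_0 mul_one_right b_skA bprod_Cons)
  qed
qed

definition M :: "nat \<Rightarrow> nat \<Rightarrow> (nat \<Rightarrow> nat) set" where
  "M n r = {a. fs n a \<and> (\<Sum>i<n. a i) = r}"

lemma M_finite: "finite (M n r)"
proof (rule finite_subset)
  show "M n r \<subseteq> {a. \<forall>i. a i \<le> (if i < n then r else 0)}"
  proof safe
    fix a i assume a: "a \<in> M n r"
    show "a i \<le> (if i < n then r else 0)"
    proof (cases "i < n")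
      case True
      then have "a i \<le> (\<Sum>i<n. a i)" by (intro member_le_sum) auto
      then show ?thesis using a True by (simp add: M_def)
    next
      case False then show ?thesis using a by (simp add: M_def fs_def)
    qed
  qed
  show "finite {a. \<forall>i. a i \<le> (if i < n then r else 0)}" by (rule finite_below[of n]) (simp add: fs_def)
qed

lemma mono_inj: "inj (mono :: (nat \<Rightarrow> nat) \<Rightarrow> 'k::field skel)"
proof (rule injI)
  fix a b assume "(mono a :: 'k skel) = mono b"
  then have "(mono a :: 'k skel) a = mono b a" by simp
  then show "a = b" by (simp add: mono_def split: if_splits)
qed

lemma skA_deg_span_mono: "skA_deg n r \<subseteq> V.span (mono ` M n r)"
proof
  fix f assume f: "f \<in> skA_deg n r"
  then have fA: "f \<in> skA n" using skA_deg_sub by blast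
  have "(\<Sum>a\<in>{a. f a \<noteq> 0}. sc (f a) (mono a)) \<in> V.span (mono ` M n r)"
  proof (rule V.span_sum)
    fix a assume "a \<in> {a. f a \<noteq> 0}"
    then have "a \<in> M n r" using f by (auto simp: M_def skA_deg_def skA_def fs_def)
    then have "mono a \<in> mono ` M n r" by (rule imageI)
    then show "sc (f a) (mono a) \<in> V.span (mono ` M n r)" by (intro V.span_scale V.span_base)
  qed
  then show "f \<in> V.span (mono ` M n r)" using expand[OF fA] by simp
qed

lemma mono_indep: "V.independent (mono ` M n r :: 'k::field skel set)"
proof -
  have fin: "finite (mono ` M n r :: 'k skel set)" using M_finite by simp
  show ?thesis
  proof (rule ccontr)
    assume "\<not> V.independent (mono ` M n r :: 'k skel set)"
    then have "\<exists>u. (\<exists>v\<in>mono ` M n r. u v \<noteq> 0) \<and> (\<Sum>v\<in>mono ` M n r. sc (u v) v) = (0 :: 'k skel)"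
      by (simp only: V.dependent_finite[OF fin] not_not)
    then obtain u where u0: "(\<exists>v\<in>mono ` M n r. u v \<noteq> 0) \<and> (\<Sum>v\<in>mono ` M n r. sc (u v) v) = (0 :: 'k skel)" ..
    note u = conjunct1[OF u0] conjunct2[OF u0]
    from u(1) obtain a0 where a0: "a0 \<in> M n r" "u (mono a0) \<noteq> 0" by blast
    have "0 = (\<Sum>v\<in>mono ` M n r. sc (u v) v) a0" by (simp only: u(2) zero_fun_apply)
    also have "\<dots> = (\<Sum>v\<in>mono ` M n r. if v = mono a0 then u v else 0)"
      unfolding sum_fun_apply
    proof (intro sum.cong refl)
      fix v :: "'k skel" assume "v \<in> mono ` M n r"
      then obtain a where v: "v = mono a" by blast
      have iff: "(v = mono a0) = (a = a0)" unfolding v by (rule inj_eq[OF mono_inj])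
      show "sc (u v) v a0 = (if v = mono a0 then u v else 0)"
        using iff v by (auto simp: mono_def)
    qed
    also have "\<dots> = u (mono a0)" using fin a0 by (simp add: sum.delta')
    finally show False using a0 by simp
  qed
qed

lemma dim_deg: "V.dim (skA_deg n r :: 'k::field skel set) = card (M n r)"
proof -
  have "V.dim (skA_deg n r :: 'k skel set) = card (mono ` M n r :: 'k skel set)"
  proof (rule V.dim_unique)
    show "mono ` M n r \<subseteq> (skA_deg n r :: 'k skel set)"
      by (auto simp: M_def intro!: mono_deg[of n, simplified])
    show "skA_deg n r \<subseteq> V.span (mono ` M n r :: 'k skel set)" by (rule skA_deg_span_mono)
    show "V.independent (mono ` M n r :: 'k skel set)" by (rule mono_indep)
  qed simp
  also have "\<dots> = card (M n r)" by (rule card_image) (meson inj_on_subset mono_inj subset_UNIV)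
  finally show ?thesis .
qed

lemma idx_M: "bij_betw (\<lambda>(iv, jv) s. iv s + 2 * jv s) (sk_idx n r) (M n r)"
proof (rule bij_betw_byWitness[where f'="\<lambda>a. (\<lambda>s. a s mod 2, \<lambda>s. a s div 2)"])
  show "\<forall>p\<in>sk_idx n r. (\<lambda>a. (\<lambda>s. a s mod 2, \<lambda>s. a s div 2)) ((\<lambda>(iv, jv) s. iv s + 2 * jv s) p) = p"
  proof
    fix p assume p: "p \<in> sk_idx n r"
    obtain iv jv where pp: "p = (iv, jv)" by fastforce
    have "iv s \<le> 1" for s using p pp by (auto simp: sk_idx_def)
    then have z: "iv s = 0 \<or> iv s = 1" for s by (metis le_neq_implies_less less_one)
    have m: "iv s mod 2 = iv s" for s using z[of s] by auto
    have d: "(iv s + 2 * jv s) div 2 = jv s" for s using z[of s] by auto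
    note m d
    then show "(\<lambda>a. (\<lambda>s. a s mod 2, \<lambda>s. a s div 2)) ((\<lambda>(iv, jv) s. iv s + 2 * jv s) p) = p"
      using pp by simp
  qed
  show "\<forall>a\<in>M n r. (\<lambda>(iv, jv) s. iv s + 2 * jv s) ((\<lambda>a. (\<lambda>s. a s mod 2, \<lambda>s. a s div 2)) a) = a"
    by simp
  show "(\<lambda>(iv, jv) s. iv s + 2 * jv s) ` sk_idx n r \<subseteq> M n r"
    by (auto simp: sk_idx_def M_def fs_def sum.distrib sum_distrib_left)
  show "(\<lambda>a. (\<lambda>s. a s mod 2, \<lambda>s. a s div 2)) ` M n r \<subseteq> sk_idx n r"
  proof safe
    fix a assume a: "a \<in> M n r"
    have "(\<Sum>s<n. a s mod 2) + 2 * (\<Sum>s<n. a s div 2) = (\<Sum>s<n. a s mod 2 + 2 * (a s div 2))"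
      by (simp only: sum.distrib sum_distrib_left)
    also have "\<dots> = (\<Sum>s<n. a s)" by (simp only: mod_mult_div_eq)
    finally show "(\<lambda>s. a s mod 2, \<lambda>s. a s div 2) \<in> sk_idx n r"
      using a by (auto simp: sk_idx_def M_def fs_def)
  qed
qed



lemma lincomb_eq: "sk_lincomb I u v = (\<Sum>p\<in>I. sc (u p) (v p))"
  by (simp add: sk_lincomb_def fun_eq_iff sum_fun_apply)

lemma card_le_dim_spanning:
  assumes BV: "(B :: 'k::field skel set) \<subseteq> V"
    and VB: "V \<subseteq> V.span B"
    and fB: "finite B"
    and dVB: "V.dim V \<ge> card B"
  shows "V.independent B"
proof -
  {
    fix a
    assume a: "a \<in> B" "a \<in> V.span (B - {a})"
    from a fB have c0: "card B \<noteq> 0"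
      by auto
    from a fB have cb: "card (B - {a}) = card B - 1"
      by auto
    {
      fix x
      assume x: "x \<in> V"
      from a have eq: "insert a (B - {a}) = B"
        by blast
      from x VB have x': "x \<in> V.span B"
        by blast
      from V.span_trans[OF a(2), unfolded eq, OF x']
      have "x \<in> V.span (B - {a})" .
    }
    then have th1: "V \<subseteq> V.span (B - {a})"
      by blast
    have th2: "finite (B - {a})"
      using fB by auto
    from V.dim_le_card[OF th1 th2]
    have c: "V.dim V \<le> card (B - {a})" .
    from c c0 dVB cb have False by simp
  }
  then show ?thesis
    unfolding V.dependent_def by blast
qed

context
  fixes n :: nat and w :: "'k::field_char_0"
  assumes wn: "w ^ n = 1" and n0: "0 < n" and prim: "\<forall>m. 0 < m \<and> m < n \<longrightarrow> w ^ m \<noteq> 1"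
begin

lemma gsum: "(\<Sum>g<n. w ^ (g * t)) = (if n dvd t then of_nat n else 0)"
proof (cases "n dvd t")
  case True
  then obtain q where t: "t = n * q" by (auto elim: dvdE)
  have "w ^ (g * t) = 1" for g
  proof -
    have "w ^ (g * t) = (w ^ n) ^ (g * q)" unfolding t power_mult[symmetric] by (simp add: ac_simps)
    then show ?thesis using wn by simp
  qed
  then show ?thesis using True by simp
next
  case False
  let ?x = "w ^ t"
  have "?x = w ^ (t mod n)" by (rule omega_mod[OF wn])
  moreover have "0 < t mod n" "t mod n < n" using False n0 by (auto simp: dvd_eq_mod_eq_0)
  ultimately have x1: "?x \<noteq> 1" using prim by auto
  have xn: "?x ^ n = 1" using wn by (simp add: power_mult[symmetric] mult.commute power_mult)
  have "(\<Sum>g<n. w ^ (g * t)) = (\<Sum>g<n. ?x ^ g)" by (simp add: power_mult[symmetric] mult.commute)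
  also have "\<dots> = (?x ^ n - 1) / (?x - 1)" using geometric_sum[OF x1] by simp
  also have "\<dots> = 0" using xn by simp
  finally show ?thesis using False by simp
qed

lemma inversion:
  assumes i: "i < n"
  shows "mono (e i) = (\<Sum>g<n. sc (w ^ (g * (n - i))) (sk_b n w g))"
proof
  fix a
  have nz: "(of_nat n :: 'k) \<noteq> 0" using n0 by simp
  have "(\<Sum>g<n. sc (w ^ (g * (n - i))) (sk_b n w g)) a
      = (\<Sum>g<n. \<Sum>l<n. w ^ (g * (n - i)) * (w ^ (l * g) / of_nat n) * mono (e l) a)"
    unfolding sum_fun_apply b_expand by (simp add: sum_distrib_left mult.assoc)
  also have "\<dots> = (\<Sum>l<n. \<Sum>g<n. w ^ (g * (n - i)) * (w ^ (l * g) / of_nat n) * mono (e l) a)"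
    by (rule sum.swap)
  also have "\<dots> = (\<Sum>l<n. (\<Sum>g<n. w ^ (g * (n - i + l))) / of_nat n * mono (e l) a)"
  proof (intro sum.cong refl)
    fix l
    let ?m = "mono (e l) a :: 'k" and ?N = "of_nat n :: 'k"
    have eq: "w ^ (g * (n - i)) * w ^ (l * g) = w ^ (g * (n - i + l))" for g
      by (simp add: distrib_left power_add mult.commute)
    have "(\<Sum>g<n. w ^ (g * (n - i)) * (w ^ (l * g) / ?N) * ?m) = (\<Sum>g<n. w ^ (g * (n - i + l)) * (?m / ?N))"
      by (intro sum.cong refl) (subst eq[symmetric], simp add: divide_inverse ac_simps)
    also have "\<dots> = (\<Sum>g<n. w ^ (g * (n - i + l))) * (?m / ?N)" by (rule sum_distrib_right[symmetric])
    also have "\<dots> = (\<Sum>g<n. w ^ (g * (n - i + l))) / ?N * ?m" by (simp add: divide_inverse ac_simps)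
    finally show "(\<Sum>g<n. w ^ (g * (n - i)) * (w ^ (l * g) / ?N) * ?m)
        = (\<Sum>g<n. w ^ (g * (n - i + l))) / ?N * ?m" .
  qed
  also have "\<dots> = (\<Sum>l<n. if l = i then mono (e i) a else 0)"
  proof (intro sum.cong refl)
    fix l assume l: "l \<in> {..<n}"
    show "(\<Sum>g<n. w ^ (g * (n - i + l))) / of_nat n * mono (e l) a = (if l = i then mono (e i) a else 0)"
      unfolding gsum using dvd_shift[OF i, of l] l nz by auto
  qed
  also have "\<dots> = mono (e i) a" using i by (simp add: sum.delta')
  finally show "mono (e i) a = (\<Sum>g<n. sc (w ^ (g * (n - i))) (sk_b n w g)) a" by simp
qed

lemma cpart0: "cpart n w (\<lambda>_. 0) = sk_one"
  unfolding cpart_def pow_0 by (rule prod_ones) simp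

lemma one_G: "sk_one \<in> G n w 0"
proof -
  have "sk_one = sk_mul n (bprod n w []) (cpart n w (\<lambda>_. 0))"
    by (simp add: cpart0 bprod_def sk_prod_def mul_one_left one_skA)
  then show ?thesis unfolding G_def by (intro CollectI exI[of _ "[]"] exI[of _ "\<lambda>_. 0"]) simp
qed

lemma sign_sq: "sk_sign n a b * sk_sign n a b = (1::'k)"
  by (simp add: sk_sign_def power_mult_distrib[symmetric])

lemma mono_span: "fs n a \<Longrightarrow> (\<Sum>i<n. a i) = r \<Longrightarrow> mono a \<in> V.span (G n w r)"
proof (induct r arbitrary: a)
  case 0
  have "a = 0"
  proof
    fix i show "a i = 0 i"
    proof (cases "i < n")
      case True then show ?thesis using 0 by (simp add: sum_eq_0_iff)
    next
      case False then show ?thesis using 0 by (simp add: fs_def)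
    qed
  qed
  then have "mono a = sk_one" by (simp add: sk_one_mono)
  then show ?case by (subst \<open>mono a = sk_one\<close>) (rule V.span_base[OF one_G])
next
  case (Suc r)
  obtain i where i: "i < n" "0 < a i"
  proof (rule ccontr)
    assume "\<not> thesis"
    then have "\<forall>i<n. a i = 0" using Suc.prems that by auto
    then show False using Suc.prems by simp
  qed
  define a' where "a' = (\<lambda>j. a j - e i j)"
  have aa: "a = e i + a'" using i by (auto simp: a'_def e_def fun_eq_iff)
  have fa': "fs n a'" using Suc.prems by (simp add: a'_def fs_def e_def)
  have "(\<Sum>j<n. a j) = (\<Sum>j<n. e i j) + (\<Sum>j<n. a' j)" unfolding aa by (simp add: sum.distrib)
  also have "(\<Sum>j<n. e i j) = 1" using i by (simp add: e_def)
  finally have sa': "(\<Sum>j<n. a' j) = r" using Suc.prems by simp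
  let ?s = "sk_sign n (e i) a' :: 'k"
  have "sk_mul n (mono (e i)) (mono a') = sc ?s (mono a)"
    unfolding aa by (rule mul_mono[OF fs_e[OF i(1)] fa'])
  then have "mono a = sc ?s (sk_mul n (mono (e i)) (mono a'))"
    by (simp add: sc_sc sign_sq)
  also have "\<dots> = sc ?s (\<Sum>g<n. sc (w ^ (g * (n - i))) (sk_mul n (sk_b n w g) (mono a')))"
    unfolding inversion[OF i(1)] mul_sum_left mul_sc_left ..
  also have "\<dots> \<in> V.span (G n w (Suc r))"
  proof (intro V.span_scale V.span_sum)
    fix g assume "g \<in> {..<n}"
    then show "sk_mul n (sk_b n w g) (mono a') \<in> V.span (G n w (Suc r))"
      using key3[OF wn n0 Suc.hyps[OF fa' sa']] by simp
  qed
  finally show ?case .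
qed

lemma deg_span_G: "skA_deg n r \<subseteq> V.span (G n w r)"
proof -
  have "mono ` M n r \<subseteq> V.span (G n w r)" using mono_span by (auto simp: M_def)
  then have "V.span (mono ` M n r) \<subseteq> V.span (G n w r)"
    by (intro V.span_minimal V.subspace_span)
  then show ?thesis using skA_deg_span_mono by blast
qed

lemma G_deg: "G n w r \<subseteq> skA_deg n r"
  unfolding G_def using mul_deg[OF bprod_deg cpart_deg[OF wn n0]] by auto

lemma bas_eq:
  assumes "\<forall>s. fst p s \<le> 1"
  shows "sk_bas n w p = sk_mul n (bprod n w (filter (\<lambda>g. fst p g = 1) [0..<n])) (cpart n w (snd p))"
proof -
  have "sk_bas n w p = sk_mul n (sk_prod n (map (\<lambda>g. sk_pow n (sk_b n w g) (fst p g)) [0..<n]))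
      (sk_prod n (map (\<lambda>g. sk_pow n (sk_c n w g 0) (snd p g)) [0..<n]))"
    unfolding sk_bas_def
  proof (rule prod_append)
    fix x assume "x \<in> set (map (\<lambda>g. sk_pow n (sk_b n w g) (fst p g)) [0..<n])"
    have "sk_pow n (sk_b n w g) k \<in> skA n" for g k using pow_deg[OF b_deg, of n w g k] skA_deg_sub by auto
    then show "x \<in> skA n" using \<open>x \<in> _\<close> by auto
  next
    fix x assume "x \<in> set (map (\<lambda>g. sk_pow n (sk_c n w g 0) (snd p g)) [0..<n])"
    then obtain g where g: "g < n" "x = sk_pow n (sk_c n w g 0) (snd p g)" by auto
    show "x \<in> skA n" using pow_deg[OF cc_deg[OF wn n0 g(1)], of "snd p g"] skA_deg_sub g(2) by auto
  qed
  then show ?thesis unfolding cpart_def prod_pow_filter[OF assms] .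
qed

lemma sum_iv:
  assumes "\<forall>x. iv x \<le> (1::nat)"
  shows "length (filter (\<lambda>g. iv g = 1) [0..<n]) = (\<Sum>s<n. iv s)"
proof -
  have "length (filter (\<lambda>g. iv g = 1) [0..<n]) = sum_list (map iv [0..<n])" by (rule len_filter_sum[OF assms])
  then show ?thesis by (simp add: interv_sum_list_conv_sum_set_nat atLeast0LessThan)
qed

lemma G_bas: "G n w r = sk_bas n w ` sk_idx n r"
proof
  show "sk_bas n w ` sk_idx n r \<subseteq> G n w r"
  proof
    fix x assume "x \<in> sk_bas n w ` sk_idx n r"
    then obtain iv jv where p: "(iv, jv) \<in> sk_idx n r" and x: "x = sk_bas n w (iv, jv)" by auto
    have iv: "\<forall>s. iv s \<le> 1" using p by (simp add: sk_idx_def)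
    let ?L = "filter (\<lambda>g. iv g = 1) [0..<n]"
    have "x = sk_mul n (bprod n w ?L) (cpart n w jv)" using bas_eq[of "(iv, jv)"] iv x by simp
    moreover have "sorted_wrt (<) ?L" by (rule sorted_wrt_filter) simp
    moreover have "length ?L + 2 * (\<Sum>s<n. jv s) = r" using p sum_iv[OF iv] by (simp add: sk_idx_def)
    ultimately show "x \<in> G n w r" using p unfolding G_def sk_idx_def
      by (intro CollectI exI[of _ ?L] exI[of _ jv]) auto
  qed
  show "G n w r \<subseteq> sk_bas n w ` sk_idx n r"
  proof
    fix x assume "x \<in> G n w r"
    then obtain L jv where x: "x = sk_mul n (bprod n w L) (cpart n w jv)" and L: "sorted_wrt (<) L"
      "set L \<subseteq> {..<n}" "\<forall>s\<ge>n. jv s = 0" "length L + 2 * (\<Sum>s<n. jv s) = r"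
      unfolding G_def by blast
    define iv where "iv = (\<lambda>g. if g \<in> set L then 1 else (0::nat))"
    have iv1: "\<forall>s. iv s \<le> 1" by (simp add: iv_def)
    have f1: "filter (\<lambda>g. iv g = 1) [0..<n] = filter (\<lambda>g. g \<in> set L) [0..<n]"
      by (rule filter_cong) (auto simp: iv_def)
    have f2: "filter (\<lambda>g. g \<in> set L) [0..<n] = L"
    proof (rule sorted_distinct_set_unique)
      have "sorted_wrt (<) (filter (\<lambda>g. g \<in> set L) [0..<n])" by (rule sorted_wrt_filter) simp
      then show "sorted (filter (\<lambda>g. g \<in> set L) [0..<n])" "distinct (filter (\<lambda>g. g \<in> set L) [0..<n])"
        by (simp_all add: strict_sorted_iff)
      show "sorted L" "distinct L" using L(1) by (simp_all add: strict_sorted_iff)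
      show "set (filter (\<lambda>g. g \<in> set L) [0..<n]) = set L" using L(2) by auto
    qed
    have "(\<Sum>s<n. iv s) = length L" using sum_iv[OF iv1] f1 f2 by simp
    then have "(iv, jv) \<in> sk_idx n r" using L iv1 by (auto simp: sk_idx_def iv_def)
    moreover have "x = sk_bas n w (iv, jv)" using bas_eq[of "(iv, jv)"] iv1 f1 f2 x by simp
    ultimately show "x \<in> sk_bas n w ` sk_idx n r" by blast
  qed
qed

lemma basis: "sk_is_basis (sk_idx n r) (sk_bas n w) (skA_deg n r)"
proof -
  let ?I = "sk_idx n r" and ?B = "sk_bas n w ` sk_idx n r" and ?V = "skA_deg n r :: 'k skel set"
  have finI: "finite ?I" using bij_betw_finite[OF idx_M] M_finite by blast
  have finB: "finite ?B" using finI by simp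
  have BV: "?B \<subseteq> ?V" using G_deg G_bas by blast
  have VB: "?V \<subseteq> V.span ?B" using deg_span_G G_bas by simp
  have d: "V.dim ?V = card (M n r)" by (rule dim_deg)
  have cI: "card ?I = V.dim ?V" using bij_betw_same_card[OF idx_M] d by simp
  have "card ?B \<le> V.dim ?V" using card_image_le[OF finI] cI by simp
  then have indB: "V.independent ?B" using card_le_dim_spanning[OF BV VB finB] by simp
  have "card ?B = V.dim ?V" by (rule V.basis_card_eq_dim[OF BV VB indB])
  then have inj: "inj_on (sk_bas n w) ?I" using eq_card_imp_inj_on[OF finI] cI by simp
  have reidx: "(\<Sum>v\<in>?B. sc (h v) v) = (\<Sum>p\<in>?I. sc (h (sk_bas n w p)) (sk_bas n w p))" for h
    using sum.reindex[OF inj] by simp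
  show ?thesis unfolding sk_is_basis_def
  proof (intro conjI ballI allI impI)
    show "finite ?I" by (rule finI)
    fix p assume "p \<in> ?I" then show "sk_bas n w p \<in> ?V" using BV by blast
  next
    fix u p assume u: "sk_lincomb ?I u (sk_bas n w) = sk_zero" and p: "p \<in> ?I"
    define u' where "u' = (\<lambda>v. u (the_inv_into ?I (sk_bas n w) v))"
    have u'b: "u' (sk_bas n w q) = u q" if "q \<in> ?I" for q
      unfolding u'_def using the_inv_into_f_f[OF inj that] by simp
    have "(\<Sum>v\<in>?B. sc (u' v) v) = (\<Sum>p\<in>?I. sc (u p) (sk_bas n w p))"
      unfolding reidx by (intro sum.cong refl) (simp add: u'b)
    also have "\<dots> = 0" using u by (simp add: lincomb_eq sk_zero_eq)
    finally have z: "(\<Sum>v\<in>?B. sc (u' v) v) = 0" .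
    have nz: "\<not> (\<exists>v\<in>?B. u' v \<noteq> 0)"
    proof
      assume asm: "\<exists>v\<in>?B. u' v \<noteq> 0"
      have "(\<exists>v\<in>?B. u' v \<noteq> 0) \<and> (\<Sum>v\<in>?B. sc (u' v) v) = 0" using asm z by (rule conjI)
      then have "V.dependent ?B" unfolding V.dependent_finite[OF finB] by (rule exI[where x=u'])
      then show False using indB by simp
    qed
    have bp: "sk_bas n w p \<in> ?B" using p by (rule imageI)
    have "u' (sk_bas n w p) = 0" using nz bp by blast
    then show "u p = 0" using u'b[OF p] by simp
  next
    fix f assume f: "f \<in> ?V"
    then have "f \<in> V.span ?B" using VB by blast
    then have "f \<in> range (\<lambda>c. \<Sum>v\<in>?B. sc (c v) v)" by (simp only: V.span_finite[OF finB])
    then obtain c where c: "f = (\<Sum>v\<in>?B. sc (c v) v)" by (rule rangeE)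
    have "sk_lincomb ?I (\<lambda>p. c (sk_bas n w p)) (sk_bas n w) = (\<Sum>p\<in>?I. sc (c (sk_bas n w p)) (sk_bas n w p))"
      by (rule lincomb_eq)
    also have "\<dots> = (\<Sum>v\<in>?B. sc (c v) v)" by (rule reidx[symmetric])
    also have "\<dots> = f" by (rule c[symmetric])
    finally show "\<exists>u. f = sk_lincomb ?I u (sk_bas n w)" by (intro exI[of _ "\<lambda>p. c (sk_bas n w p)"]) (rule sym)
  qed
qed

end

theorem proposition1p2:
  fixes \<omega> :: "'k::field_char_0" and n :: nat
  assumes alg_closed: "\<forall>p :: 'k poly. degree p > 0 \<longrightarrow> (\<exists>z. poly p z = 0)"
    and n2: "n \<ge> 2"
    and prim: "\<omega> ^ n = 1" "\<forall>m. 0 < m \<and> m < n \<longrightarrow> \<omega> ^ m \<noteq> 1"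
  shows "(\<forall>j<n. \<forall>k<n. \<forall>k'<n. sk_c n \<omega> j k = sk_c n \<omega> j k')
       \<and> (\<forall>j<n. \<forall>k<n. \<forall>f\<in>skA n. sk_mul n (sk_c n \<omega> j k) f = sk_mul n f (sk_c n \<omega> j k))
       \<and> (\<forall>r. sk_is_basis (sk_idx n r) (sk_bas n \<omega>) (skA_deg n r))"
proof (intro conjI allI impI ballI)
  have n0: "0 < n" using n2 by simp
  show "sk_c n \<omega> j k = sk_c n \<omega> j k'" if "j < n" "k < n" "k' < n" for j k k'
    using c_formula[OF prim(1)] that by simp
  show "sk_mul n (sk_c n \<omega> j k) f = sk_mul n f (sk_c n \<omega> j k)" if "j < n" "k < n" "f \<in> skA n" for j k f
    using c_formula[OF prim(1)] C_central that by simp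
  show "sk_is_basis (sk_idx n r) (sk_bas n \<omega>) (skA_deg n r)" for r
    by (rule basis[OF prim(1) n0 prim(2)])
qed


end
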